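(* Let $V$ be a potential on $\Pi^d$ with $|V(x)|\le\log\frac1{|x|}+C$, and let $\bar\rho$ be a bounded probability density on $\Pi^d$. Then for every $\kappa<d$ there is a constant $C_d$ (depending on $d$, $C$ and $\kappa$) such that for all $N$ and all $\rho_N\in\mathcal P(\Pi^{dN})$, $$\int_{\Pi^{dN}}\rho_N\int_{\Pi^{2d}\cap\{x\ne y\}}V(x-y)\,d\mu_N^{\otimes2}\,dX^N\le\frac1\kappa\mathcal H_N(\rho_N|\bar\rho_N)+C_d\|\bar\rho\|_{L^\infty}.$$
   Context: $\mu_N=\frac1N\sum_i\delta_{x_i}$, $\bar\rho_N=\bar\rho^{\otimes N}$, $\mathcal H_N(\rho_N|\bar\rho_N)=\frac1N\int\rho_N\log\frac{\rho_N}{\bar\rho_N}dX^N$. *)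

theory Defs
  imports "HOL-Analysis.Analysis" "HOL-Probability.Probability"
begin

text \<open>The torus \<Pi>^d = R^d / Z^d, represented by the fundamental cell [0,1)^d.\<close>

definition lattice :: "(real ^ 'd) set" where
  "lattice = {k. \<forall>i. k $ i \<in> \<int>}"

definition torus_cell :: "(real ^ 'd::finite) set" where
  "torus_cell = {x. \<forall>i. 0 \<le> x $ i \<and> x $ i < 1}"

definition torus :: "(real ^ 'd::finite) measure" where
  "torus = restrict_space lborel torus_cell"

definition tnorm :: "real ^ 'd::finite \<Rightarrow> real" where
  "tnorm x = infdist x lattice"

definition periodic :: "(real ^ 'd::finite \<Rightarrow> real) \<Rightarrow> bool" where
  "periodic V \<longleftrightarrow> (\<forall>x k. k \<in> lattice \<longrightarrow> V (x + k) = V x)"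

definition config :: "nat \<Rightarrow> (nat \<Rightarrow> real ^ 'd::finite) measure" where
  "config N = PiM {..<N} (\<lambda>_. torus)"

definition tensor_dens :: "nat \<Rightarrow> (real ^ 'd::finite \<Rightarrow> real) \<Rightarrow> (nat \<Rightarrow> real ^ 'd) \<Rightarrow> real" where
  "tensor_dens N \<rho> X = (\<Prod>i<N. \<rho> (X i))"

definition rel_entropy :: "nat \<Rightarrow> ((nat \<Rightarrow> real ^ 'd::finite) \<Rightarrow> real) \<Rightarrow> (real ^ 'd \<Rightarrow> real) \<Rightarrow> real" where
  "rel_entropy N \<rho>N \<rho>bar =
     (1 / real N) * (\<integral>X. \<rho>N X * ln (\<rho>N X / tensor_dens N \<rho>bar X) \<partial>config N)"

text \<open>\<integral>_{x\<noteq>y} V(x-y) d\<mu>_N^{\<otimes>2} with \<mu>_N the empirical measure of X.\<close>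
definition interaction :: "nat \<Rightarrow> (real ^ 'd::finite \<Rightarrow> real) \<Rightarrow> (nat \<Rightarrow> real ^ 'd) \<Rightarrow> real" where
  "interaction N V X =
     (1 / (real N)^2) * (\<Sum>i<N. \<Sum>j<N. if X i \<noteq> X j then V (X i - X j) else 0)"

definition Linf_norm :: "(real ^ 'd::finite \<Rightarrow> real) \<Rightarrow> real" where
  "Linf_norm f = real_of_ereal (esssup torus (\<lambda>x. ereal \<bar>f x\<bar>))"

end

theory Submission
  imports Defs
begin


definition pe :: "real \<Rightarrow> real \<Rightarrow> ennreal" where
  "pe s v = (if v = 0 then \<infinity> else ennreal (\<bar>v\<bar> powr (-s)))"

lemma pe_meas[measurable]: "pe s \<in> borel_measurable borel"
  unfolding pe_def by measurable

lemma pe_minus[simp]: "pe s (-v) = pe s v"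
  by (simp add: pe_def)

lemma pe_half:
  assumes "0 \<le> s" "s < 1"
  shows "(\<integral>\<^sup>+v. indicator {0..3} v * pe s v \<partial>lborel) = ennreal (3 powr (1-s) / (1-s))"
proof -
  have "(\<integral>\<^sup>+v. indicator {0..3} v * pe s v \<partial>lborel) =
        (\<integral>\<^sup>+v. ennreal (indicator {0..3} v * (v powr (-s))) \<partial>lborel)"
    apply (rule nn_integral_cong_AE)
    using AE_lborel_singleton[of 0]
    by eventually_elim (auto simp: pe_def indicator_def)
  also have "\<dots> = ennreal (3 powr (1 - s) / (1 - s))"
    apply (rule nn_integral_has_integral_lebesgue)
    using has_integral_powr_from_0[of "-s" 3] assms by auto
  finally show ?thesis .
qed

lemma pe_sym:
  assumes "0 \<le> s" "s < 1"
  shows "(\<integral>\<^sup>+v. indicator {-3..3} v * pe s v \<partial>lborel) \<le> ennreal (2 * (3 powr (1-s) / (1-s)))"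
proof -
  have "(\<integral>\<^sup>+v. indicator {-3..3} v * pe s v \<partial>lborel) \<le>
        (\<integral>\<^sup>+v. indicator {0..3} v * pe s v + indicator {-3..0} v * pe s v \<partial>lborel)"
    by (rule nn_integral_mono) (auto simp: indicator_def)
  also have "\<dots> = (\<integral>\<^sup>+v. indicator {0..3} v * pe s v \<partial>lborel) + (\<integral>\<^sup>+v. indicator {-3..0} v * pe s v \<partial>lborel)"
    by (rule nn_integral_add) auto
  also have "(\<integral>\<^sup>+v. indicator {-3..0} v * pe s v \<partial>lborel) = (\<integral>\<^sup>+v. indicator {0..3} v * pe s v \<partial>lborel)"
    by (subst nn_integral_real_affine[where c="-1" and t=0]) (auto intro!: nn_integral_cong simp: indicator_def)
  also have "(\<integral>\<^sup>+v. indicator {0..3} v * pe s v \<partial>lborel) + (\<integral>\<^sup>+v. indicator {0..3} v * pe s v \<partial>lborel)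
     = ennreal (2 * (3 powr (1-s) / (1-s)))"
    using assms by (simp add: pe_half ennreal_plus[symmetric] del: ennreal_plus)
  finally show ?thesis .
qed

lemma pe_shift:
  assumes "0 \<le> s" "s < 1" "-2 \<le> a" "a \<le> 2"
  shows "(\<integral>\<^sup>+t. indicator {0..1} t * pe s (a - t) \<partial>lborel) \<le> ennreal (2 * (3 powr (1-s) / (1-s)))"
proof -
  have "(\<integral>\<^sup>+t. indicator {0..1} t * pe s (a - t) \<partial>lborel) = (\<integral>\<^sup>+v. indicator {0..1} (a - v) * pe s v \<partial>lborel)"
    by (subst (2) nn_integral_real_affine[where c="-1" and t=a]) auto
  also have "\<dots> \<le> (\<integral>\<^sup>+v. indicator {-3..3} v * pe s v \<partial>lborel)"
    using assms by (intro nn_integral_mono) (auto simp: indicator_def)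
  also have "\<dots> \<le> ennreal (2 * (3 powr (1-s) / (1-s)))" by (rule pe_sym[OF assms(1,2)])
  finally show ?thesis .
qed

lemma cell_sets[measurable]: "torus_cell \<in> sets (borel :: (real^'d::finite) measure)"
  unfolding torus_cell_def by measurable

lemma cell_sets': "(torus_cell :: (real^'d::finite) set) \<inter> space lborel \<in> sets lborel"
  by simp

lemma Basis_cart_ex: "b \<in> (Basis :: (real^'d::finite) set) \<Longrightarrow> \<exists>i. b = axis i 1"
  by (auto simp: Basis_vec_def)

definition delta :: "real \<Rightarrow> real" where
  "delta u = min (min \<bar>u\<bar> \<bar>u - 1\<bar>) \<bar>u + 1\<bar>"

definition psi :: "real \<Rightarrow> real \<Rightarrow> ennreal" where
  "psi s u = (if delta u = 0 then \<infinity> else ennreal (delta u powr (-s)))"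

lemma delta_meas[measurable]: "delta \<in> borel_measurable borel"
  unfolding delta_def by measurable

lemma psi_meas[measurable]: "psi s \<in> borel_measurable borel"
  unfolding psi_def by measurable

lemma delta_nonneg: "0 \<le> delta u" by (simp add: delta_def)

lemma psi_nz: "psi s u \<noteq> 0"
  by (auto simp: psi_def delta_nonneg)

lemma psi_le_pe: "psi s u \<le> pe s u + pe s (u - 1) + pe s (u + 1)"
proof -
  have "delta u = \<bar>u\<bar> \<or> delta u = \<bar>u - 1\<bar> \<or> delta u = \<bar>u + 1\<bar>"
    by (auto simp: delta_def min_def)
  then show ?thesis
    by (auto simp: psi_def pe_def add_increasing2 add_increasing)
qed

lemma delta_le_int:
  assumes "\<bar>u\<bar> < 1" "n \<in> \<int>"
  shows "delta u \<le> \<bar>u - n\<bar>"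
proof -
  obtain m :: int where n: "n = of_int m" using assms(2) Ints_cases by blast
  consider "m = 0" | "m = 1" | "m = -1" | "m \<ge> 2" | "m \<le> -2" by linarith
  then show ?thesis
  proof cases
    case 4
    then have "real_of_int m \<ge> 2" by simp
    then show ?thesis using assms(1) n by (auto simp: delta_def)
  next
    case 5
    then have "real_of_int m \<le> -2" by simp
    then show ?thesis using assms(1) n by (auto simp: delta_def)
  qed (auto simp: delta_def n)
qed

lemma lattice_inner_int:
  assumes "k \<in> lattice" "b \<in> (Basis :: (real^'d::finite) set)"
  shows "k \<bullet> b \<in> \<int>"
proof -
  obtain i where "b = axis i 1" using Basis_cart_ex[OF assms(2)] by blast
  then show ?thesis using assms(1) by (simp add: lattice_def inner_axis)
qed

lemma delta_le_tnorm:
  fixes z :: "real^'d::finite"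
  assumes "\<And>b. b \<in> Basis \<Longrightarrow> \<bar>z \<bullet> b\<bar> < 1" "b \<in> Basis"
  shows "delta (z \<bullet> b) \<le> tnorm z"
proof -
  have ne: "lattice \<noteq> {}" by (auto simp: lattice_def intro: exI[of _ 0])
  have "delta (z \<bullet> b) \<le> dist z k" if k: "k \<in> lattice" for k
  proof -
    have "delta (z \<bullet> b) \<le> \<bar>z \<bullet> b - k \<bullet> b\<bar>"
      by (rule delta_le_int[OF assms(1)[OF assms(2)] lattice_inner_int[OF k assms(2)]])
    also have "\<dots> = \<bar>(z - k) \<bullet> b\<bar>" by (simp add: inner_diff_left)
    also have "\<dots> \<le> norm (z - k)" using Basis_le_norm[OF assms(2)] by blast
    finally show ?thesis by (simp add: dist_norm)
  qed
  then show ?thesis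
    unfolding tnorm_def infdist_def using ne by (auto intro!: cINF_greatest)
qed

definition Kb :: "real \<Rightarrow> real" where "Kb s = 2 * (3 powr (1-s) / (1-s))"

lemma psi_int:
  assumes "0 \<le> s" "s < 1" "0 \<le> c" "c < 1"
  shows "(\<integral>\<^sup>+t. indicator {0..1} t * psi s (c - t) \<partial>lborel) \<le> ennreal (3 * Kb s)"
proof -
  have "(\<integral>\<^sup>+t. indicator {0..1} t * psi s (c - t) \<partial>lborel) \<le>
     (\<integral>\<^sup>+t. indicator {0..1} t * pe s (c - t) + indicator {0..1} t * pe s ((c - 1) - t)
         + indicator {0..1} t * pe s ((c + 1) - t) \<partial>lborel)"
  proof (rule nn_integral_mono)
    fix t
    have e1: "c - t - 1 = (c - 1) - t" "c - t + 1 = (c + 1) - t" by simp_all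
    have "psi s (c - t) \<le> pe s (c - t) + pe s ((c - 1) - t) + pe s ((c + 1) - t)"
      using psi_le_pe[of s "c - t"] unfolding e1 .
    then have "indicator {0..1} t * psi s (c - t) \<le> indicator {0..1} t * (pe s (c - t) + pe s ((c - 1) - t) + pe s ((c + 1) - t))"
      by (rule mult_left_mono) simp
    then show "indicator {0..1} t * psi s (c - t) \<le> indicator {0..1} t * pe s (c - t) + indicator {0..1} t * pe s ((c - 1) - t)
         + indicator {0..1} t * pe s ((c + 1) - t)"
      by (simp add: distrib_left)
  qed
  also have "\<dots> = (\<integral>\<^sup>+t. indicator {0..1} t * pe s (c - t) \<partial>lborel)
       + (\<integral>\<^sup>+t. indicator {0..1} t * pe s ((c - 1) - t) \<partial>lborel)
       + (\<integral>\<^sup>+t. indicator {0..1} t * pe s ((c + 1) - t) \<partial>lborel)"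
    by (subst nn_integral_add; (subst nn_integral_add)?) auto
  also have "\<dots> \<le> ennreal (Kb s) + ennreal (Kb s) + ennreal (Kb s)"
    unfolding Kb_def using assms by (intro add_mono pe_shift) auto
  also have "\<dots> = ennreal (3 * Kb s)"
    using assms by (simp add: Kb_def ennreal_plus[symmetric] del: ennreal_plus)
  finally show ?thesis .
qed

definition hf :: "real \<Rightarrow> real \<Rightarrow> real^'d::finite \<Rightarrow> real" where
  "hf \<kappa> C z = exp (\<kappa> * max 0 (ln (1 / tnorm z) + C))"

lemma hf_bound:
  fixes z :: "real^'d::finite"
  assumes k: "0 < \<kappa>" and s: "s * real CARD('d) = \<kappa>"
    and z: "\<And>b. b \<in> Basis \<Longrightarrow> \<bar>z \<bullet> b\<bar> < 1"
  shows "ennreal (hf \<kappa> C z) \<le> 1 + ennreal (exp (\<kappa> * C)) * (\<Prod>b\<in>Basis. psi s (z \<bullet> b))"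
proof (cases "\<exists>b\<in>Basis. delta (z \<bullet> b) = 0")
  case True
  then have "(\<Prod>b\<in>Basis. psi s (z \<bullet> b)) = top"
    unfolding ennreal_prod_eq_top by (auto simp: psi_nz psi_def)
  then show ?thesis by (simp add: ennreal_mult_top)
next
  case False
  then have dpos: "\<And>b. b \<in> Basis \<Longrightarrow> 0 < delta (z \<bullet> b)" using delta_nonneg
    by (metis less_eq_real_def)
  define t where "t = tnorm z"
  have dt: "\<And>b. b \<in> Basis \<Longrightarrow> delta (z \<bullet> b) \<le> t"
    unfolding t_def by (rule delta_le_tnorm[OF z])
  obtain b0 :: "real^'d" where b0: "b0 \<in> Basis" using nonempty_Basis by blast
  have tpos: "0 < t" using dpos[OF b0] dt[OF b0] by linarith
  have s0: "0 < s"
  proof (rule ccontr)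
    assume "\<not> 0 < s"
    then have "s * real CARD('d) \<le> 0" by (intro mult_nonpos_nonneg) auto
    then show False using s k by simp
  qed
  have "hf \<kappa> C z \<le> 1 + exp (\<kappa> * (ln (1 / t) + C))"
    unfolding hf_def t_def[symmetric] by (auto simp: max_def)
  also have "exp (\<kappa> * (ln (1 / t) + C)) = exp (\<kappa> * C) * t powr (-\<kappa>)"
    using tpos by (simp add: powr_def ln_div exp_add[symmetric] algebra_simps)
  also have "t powr (-\<kappa>) = (\<Prod>b\<in>(Basis::(real^'d) set). t powr (-s))"
  proof -
    have "(\<Prod>b\<in>(Basis::(real^'d) set). t powr (-s)) = (t powr (-s)) ^ CARD('d)"
      by simp
    also have "\<dots> = t powr (-s * real CARD('d))"
      using tpos by (simp add: powr_realpow[symmetric] powr_powr)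
    finally show ?thesis using s by simp
  qed
  also have "(\<Prod>b\<in>(Basis::(real^'d) set). t powr (-s)) \<le> (\<Prod>b\<in>Basis. delta (z \<bullet> b) powr (-s))"
    using dpos dt s0 by (intro prod_mono) (auto intro!: powr_mono2')
  finally have "hf \<kappa> C z \<le> 1 + exp (\<kappa> * C) * (\<Prod>b\<in>Basis. delta (z \<bullet> b) powr (-s))"
    by (simp add: mult_left_mono)
  then have "ennreal (hf \<kappa> C z) \<le> ennreal (1 + exp (\<kappa> * C) * (\<Prod>b\<in>Basis. delta (z \<bullet> b) powr (-s)))"
    by (rule ennreal_leI)
  also have "\<dots> = 1 + ennreal (exp (\<kappa> * C)) * (\<Prod>b\<in>Basis. psi s (z \<bullet> b))"
    using dpos
    by (simp add: ennreal_plus ennreal_mult prod_ennreal[symmetric] psi_def prod_nonneg)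
       (intro arg_cong2[where f="(*)"] refl prod.cong, force)
  finally show ?thesis .
qed

lemma tnorm_meas[measurable]: "tnorm \<in> borel_measurable (borel :: (real^'d::finite) measure)"
  unfolding tnorm_def
  by (intro borel_measurable_continuous_onI continuous_on_infdist continuous_on_id)

lemma hf_meas[measurable]: "hf \<kappa> C \<in> borel_measurable (borel :: (real^'d::finite) measure)"
  unfolding hf_def by measurable

lemma cell_inner:
  assumes "x \<in> torus_cell" "b \<in> (Basis :: (real^'d::finite) set)"
  shows "0 \<le> x \<bullet> b \<and> x \<bullet> b < 1"
proof -
  obtain i where "b = axis i 1" using Basis_cart_ex[OF assms(2)] by blast
  then show ?thesis using assms(1) by (simp add: torus_cell_def inner_axis)
qed

lemma torus_hf_bound:
  fixes y :: "real^'d::finite"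
  assumes k: "0 < \<kappa>" and s: "s * real CARD('d) = \<kappa>" "0 \<le> s" "s < 1" and y: "y \<in> torus_cell"
  shows "(\<integral>\<^sup>+x. ennreal (hf \<kappa> C (y - x)) \<partial>torus) \<le> ennreal (1 + exp (\<kappa> * C) * (3 * Kb s) ^ CARD('d))"
proof -
  have "(\<integral>\<^sup>+x. ennreal (hf \<kappa> C (y - x)) \<partial>torus) = (\<integral>\<^sup>+x. ennreal (hf \<kappa> C (y - x)) * indicator torus_cell x \<partial>lborel)"
    unfolding torus_def by (rule nn_integral_restrict_space) simp
  also have "\<dots> \<le> (\<integral>\<^sup>+x. indicator (cbox 0 One) x + ennreal (exp (\<kappa> * C)) *
        (\<Prod>b\<in>Basis. indicator {0..1} (x \<bullet> b) * psi s (y \<bullet> b - x \<bullet> b)) \<partial>lborel)"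
  proof (rule nn_integral_mono)
    fix x :: "real^'d"
    show "ennreal (hf \<kappa> C (y - x)) * indicator torus_cell x \<le> indicator (cbox 0 One) x + ennreal (exp (\<kappa> * C)) *
        (\<Prod>b\<in>Basis. indicator {0..1} (x \<bullet> b) * psi s (y \<bullet> b - x \<bullet> b))"
    proof (cases "x \<in> torus_cell")
      case True
      have xb: "\<And>b. b \<in> Basis \<Longrightarrow> 0 \<le> x \<bullet> b \<and> x \<bullet> b < 1" using cell_inner[OF True] .
      have yb: "\<And>b. b \<in> Basis \<Longrightarrow> 0 \<le> y \<bullet> b \<and> y \<bullet> b < 1" using cell_inner[OF y] .
      have zb: "\<And>b. b \<in> Basis \<Longrightarrow> \<bar>(y - x) \<bullet> b\<bar> < 1"
        using xb yb by (force simp: inner_diff_left)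
      have cb: "x \<in> cbox 0 One" using xb by (auto simp: mem_box less_imp_le)
      have pr: "(\<Prod>b\<in>Basis. indicator {0..1} (x \<bullet> b) * psi s (y \<bullet> b - x \<bullet> b)) = (\<Prod>b\<in>Basis. psi s ((y - x) \<bullet> b))"
        using xb by (intro prod.cong) (auto simp: inner_diff_left less_imp_le)
      show ?thesis using True cb hf_bound[OF k s(1) zb, of C] unfolding pr by simp
    qed simp
  qed
  also have "\<dots> = (\<integral>\<^sup>+x. indicator (cbox 0 One) x \<partial>lborel) + ennreal (exp (\<kappa> * C)) *
        (\<integral>\<^sup>+x. (\<Prod>b\<in>Basis. indicator {0..1} (x \<bullet> b) * psi s (y \<bullet> b - x \<bullet> b)) \<partial>lborel)"
    by (subst nn_integral_add) (auto intro!: nn_integral_cmult)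
  also have "(\<integral>\<^sup>+x. indicator (cbox (0::real^'d) One) x \<partial>lborel) = 1"
    by (simp add: emeasure_lborel_cbox)
  also have "(\<integral>\<^sup>+x. (\<Prod>b\<in>Basis. indicator {0..1} (x \<bullet> b) * psi s (y \<bullet> b - x \<bullet> b)) \<partial>lborel)
     \<le> ennreal ((3 * Kb s) ^ CARD('d))"
  proof -
    have "(\<integral>\<^sup>+x. (\<Prod>b\<in>Basis. indicator {0..1} (x \<bullet> b) * psi s (y \<bullet> b - x \<bullet> b)) \<partial>lborel)
     = (\<Prod>b\<in>(Basis::(real^'d) set). (\<integral>\<^sup>+t. indicator {0..1} t * psi s (y \<bullet> b - t) \<partial>lborel))"
      by (rule nn_integral_lborel_prod) auto
    also have "\<dots> \<le> (\<Prod>b\<in>(Basis::(real^'d) set). ennreal (3 * Kb s))"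
      using cell_inner[OF y] s by (intro prod_mono_ennreal) (auto intro!: psi_int)
    also have "\<dots> = ennreal (3 * Kb s) ^ CARD('d)"
      by simp
    also have "\<dots> = ennreal ((3 * Kb s) ^ CARD('d))"
      by (rule ennreal_power) (use s in \<open>simp add: Kb_def\<close>)
    finally show ?thesis .
  qed
  also have "1 + ennreal (exp (\<kappa> * C)) * ennreal ((3 * Kb s) ^ CARD('d)) = ennreal (1 + exp (\<kappa> * C) * (3 * Kb s) ^ CARD('d))"
  proof -
    have P0: "0 \<le> (3 * Kb s) ^ CARD('d)" using s by (simp add: Kb_def)
    then show ?thesis by (simp add: ennreal_mult ennreal_plus)
  qed
  finally show ?thesis by (simp add: mult_left_mono)
qed



lemma sigma_finite_torus: "sigma_finite_measure (torus :: (real^'d::finite) measure)"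
  unfolding torus_def by (rule sigma_finite_measure_restrict_space[OF sigma_finite_lborel]) simp

lemma space_torus: "space (torus :: (real^'d::finite) measure) = torus_cell"
  by (simp add: torus_def space_restrict_space)

lemma torus_id_meas: "(\<lambda>x. x) \<in> (torus :: (real^'d::finite) measure) \<rightarrow>\<^sub>M borel"
  unfolding torus_def by (rule measurable_restrict_space1) simp

lemma config_comp_meas_torus:
  "j < N \<Longrightarrow> (\<lambda>X. X j) \<in> (config N :: (nat \<Rightarrow> real^'d::finite) measure) \<rightarrow>\<^sub>M torus"
  unfolding config_def
  by (rule measurable_component_singleton) simp

lemma config_comp_meas[measurable]:
  "j < N \<Longrightarrow> (\<lambda>X. X j) \<in> (config N :: (nat \<Rightarrow> real^'d::finite) measure) \<rightarrow>\<^sub>M borel"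
  by (rule measurable_compose[OF config_comp_meas_torus torus_id_meas])

lemma config_rho_meas:
  assumes "\<rho> \<in> borel_measurable (torus :: (real^'d::finite) measure)" "j < N"
  shows "(\<lambda>X. \<rho> (X j)) \<in> borel_measurable (config N :: (nat \<Rightarrow> real^'d) measure)"
  by (rule measurable_compose[OF config_comp_meas_torus[OF assms(2)] assms(1)])

lemma tensor_dens_meas:
  assumes "\<rho> \<in> borel_measurable (torus :: (real^'d::finite) measure)"
  shows "tensor_dens N \<rho> \<in> borel_measurable (config N :: (nat \<Rightarrow> real^'d) measure)"
  unfolding tensor_dens_def
  by (rule borel_measurable_prod) (auto intro: config_rho_meas[OF assms])

lemma shift_meas_torus:
  "h \<in> borel_measurable borel \<Longrightarrow> (\<lambda>t. h (y - t)) \<in> borel_measurable (torus::(real^'d::finite) measure)"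
proof -
  assume hm: "h \<in> borel_measurable borel"
  have "(\<lambda>x::real^'d. y - x) \<in> borel_measurable borel"
    by (intro borel_measurable_continuous_onI continuous_intros)
  then have "(\<lambda>x. h (y - x)) \<in> borel_measurable borel" by (rule measurable_compose[OF _ hm])
  then show ?thesis by (rule measurable_compose[OF torus_id_meas])
qed

lemma shift_meas_PiM:
  "h \<in> borel_measurable borel \<Longrightarrow> j \<in> I \<Longrightarrow> (\<lambda>x. h (y - x j)) \<in> borel_measurable (Pi\<^sub>M I (\<lambda>_. torus::(real^'d::finite) measure))"
  apply (rule measurable_compose[where f="\<lambda>x. x j"])
   apply (rule measurable_component_singleton, assumption)
  apply (rule shift_meas_torus, assumption)
  done

lemma star_bound:
  fixes \<rho> h :: "real^'d::finite \<Rightarrow> real"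
  assumes \<rho>m: "\<rho> \<in> borel_measurable torus" and \<rho>0: "\<And>x. 0 \<le> \<rho> x"
    and hm: "h \<in> borel_measurable borel" and h0: "\<And>x. 0 \<le> h x"
    and \<rho>M: "AE x in torus. \<rho> x \<le> M" and \<rho>1: "(\<integral>\<^sup>+x. ennreal (\<rho> x) \<partial>torus) = 1"
    and hA: "\<And>y. y \<in> torus_cell \<Longrightarrow> (\<integral>\<^sup>+x. ennreal (h (y - x)) \<partial>torus) \<le> ennreal A"
    and M0: "0 \<le> M" and A0: "0 \<le> A" and i: "i < N"
  shows "(\<integral>\<^sup>+X. ennreal (tensor_dens N \<rho> X * (\<Prod>j\<in>{..<N}-{i}. h (X i - X j))) \<partial>config N)
           \<le> ennreal ((M * A) ^ (N - 1))"
proof -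
  interpret P: product_sigma_finite "\<lambda>_. torus :: (real^'d) measure"
    using sigma_finite_torus by (simp add: product_sigma_finite_def)
  define I where "I = {..<N} - {i}"
  have ins: "{..<N} = insert i I" using i by (auto simp: I_def)
  have fI: "finite I" "i \<notin> I" by (auto simp: I_def)
  have cI: "card I = N - 1" using i by (simp add: I_def)
  let ?f = "\<lambda>X. ennreal (tensor_dens N \<rho> X * (\<Prod>j\<in>I. h (X i - X j)))"
  have fm: "?f \<in> borel_measurable (Pi\<^sub>M (insert i I) (\<lambda>_. torus))"
  proof -
    have "(\<lambda>X. tensor_dens N \<rho> X * (\<Prod>j\<in>I. h (X i - X j))) \<in> borel_measurable (config N)"
      using tensor_dens_meas[OF \<rho>m] i
      by (intro borel_measurable_times borel_measurable_prod measurable_compose[OF _ hm]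
                borel_measurable_diff config_comp_meas) (auto simp: I_def)
    then show ?thesis unfolding config_def ins by measurable
  qed
  have "(\<integral>\<^sup>+X. ?f X \<partial>config N) = (\<integral>\<^sup>+y. (\<integral>\<^sup>+x. ?f (x(i := y)) \<partial>Pi\<^sub>M I (\<lambda>_. torus :: (real^'d) measure)) \<partial>torus)"
    unfolding config_def ins by (rule P.product_nn_integral_insert_rev[OF fI fm])
  also have "\<dots> \<le> (\<integral>\<^sup>+y. ennreal (\<rho> y) * ennreal ((M * A) ^ (N - 1)) \<partial>torus)"
  proof (rule nn_integral_mono)
    fix y :: "real^'d" assume y: "y \<in> space torus"
    then have yc: "y \<in> torus_cell" by (simp add: space_torus)
    have eq: "?f (x(i := y)) = ennreal (\<rho> y) * (\<Prod>j\<in>I. ennreal (\<rho> (x j) * h (y - x j)))" for x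
    proof -
      have "tensor_dens N \<rho> (x(i := y)) = \<rho> y * (\<Prod>j\<in>I. \<rho> (x j))"
        unfolding tensor_dens_def ins using fI by (simp add: prod.insert) (rule disjI2, intro prod.cong, auto)
      moreover have "(\<Prod>j\<in>I. h ((x(i := y)) i - (x(i := y)) j)) = (\<Prod>j\<in>I. h (y - x j))"
        using fI by (intro prod.cong) auto
      ultimately show ?thesis
        using \<rho>0 h0 by (simp add: prod.distrib ennreal_mult prod_ennreal prod_nonneg mult.assoc)
    qed
    have E1: "(\<integral>\<^sup>+x. ?f (x(i := y)) \<partial>Pi\<^sub>M I (\<lambda>_. torus :: (real^'d) measure))
        = ennreal (\<rho> y) * (\<integral>\<^sup>+x. (\<Prod>j\<in>I. ennreal (\<rho> (x j) * h (y - x j))) \<partial>Pi\<^sub>M I (\<lambda>_. torus :: (real^'d) measure))"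
      unfolding eq using \<rho>m hm
      by (intro nn_integral_cmult) (measurable, auto intro: shift_meas_PiM)
    have "(\<integral>\<^sup>+x. (\<Prod>j\<in>I. ennreal (\<rho> (x j) * h (y - x j))) \<partial>Pi\<^sub>M I (\<lambda>_. torus :: (real^'d) measure))
        = (\<Prod>j\<in>I. (\<integral>\<^sup>+t. ennreal (\<rho> t * h (y - t)) \<partial>torus))"
      using fI(1) by (rule P.product_nn_integral_prod) (use \<rho>m hm torus_id_meas in measurable)
    also have "\<dots> \<le> (\<Prod>j\<in>I. ennreal (M * A))"
    proof (rule prod_mono_ennreal)
      fix j
      have "(\<integral>\<^sup>+t. ennreal (\<rho> t * h (y - t)) \<partial>torus) \<le> (\<integral>\<^sup>+t. ennreal M * ennreal (h (y - t)) \<partial>torus)"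
        apply (rule nn_integral_mono_AE)
        using \<rho>M apply eventually_elim
        using h0 \<rho>0 by (simp add: ennreal_mult[symmetric] M0 mult_right_mono)
      also have "\<dots> = ennreal M * (\<integral>\<^sup>+t. ennreal (h (y - t)) \<partial>torus)"
        using shift_meas_torus[OF hm, of y] by (intro nn_integral_cmult measurable_compose[OF _ measurable_ennreal])
      also have "\<dots> \<le> ennreal M * ennreal A" by (intro mult_left_mono hA[OF yc]) simp
      also have "\<dots> = ennreal (M * A)" using M0 A0 by (simp add: ennreal_mult)
      finally show "(\<integral>\<^sup>+t. ennreal (\<rho> t * h (y - t)) \<partial>torus) \<le> ennreal (M * A)" .
    qed
    also have "\<dots> = ennreal ((M * A) ^ (N - 1))"
      using M0 A0 cI by (simp add: ennreal_power)
    finally have Q: "(\<integral>\<^sup>+x. (\<Prod>j\<in>I. ennreal (\<rho> (x j) * h (y - x j))) \<partial>Pi\<^sub>M I (\<lambda>_. torus :: (real^'d) measure))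
       \<le> ennreal ((M * A) ^ (N - 1))" .
    show "(\<integral>\<^sup>+x. ?f (x(i := y)) \<partial>Pi\<^sub>M I (\<lambda>_. torus :: (real^'d) measure)) \<le> ennreal (\<rho> y) * ennreal ((M * A) ^ (N - 1))"
      unfolding E1 using Q by (rule mult_left_mono) simp
  qed
  also have "\<dots> = (\<integral>\<^sup>+y. ennreal (\<rho> y) \<partial>torus) * ennreal ((M * A) ^ (N - 1))"
    using \<rho>m by (intro nn_integral_multc) measurable
  also have "\<dots> = ennreal ((M * A) ^ (N - 1))" using \<rho>1 by simp
  finally show ?thesis unfolding I_def .
qed



lemma dv_pt:
  fixes u r B E :: real
  assumes u: "0 \<le> u" and r: "0 \<le> r" and ur: "r = 0 \<Longrightarrow> u = 0" and B: "0 < B" and E: "0 < E"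
  shows "u * ln E \<le> u * ln (u / r) + u * ln B - u + r * E / B"
proof (cases "u = 0")
  case True then show ?thesis using r E B by simp
next
  case False
  then have u0: "0 < u" using u by simp
  then have r0: "0 < r" using ur r by (cases "r = 0") auto
  define v where "v = r * E / B"
  have v0: "0 < v" using r0 E B by (simp add: v_def)
  have "ln (v / u) \<le> v / u - 1" using v0 u0 by (intro ln_le_minus_one) simp
  then have "u * ln (v / u) \<le> u * (v / u - 1)" using u0 by (intro mult_left_mono) auto
  also have "\<dots> = v - u" using u0 by (simp add: field_simps)
  finally have *: "u * ln (v / u) \<le> v - u" .
  have e1: "ln (v / u) = ln r + ln E - ln B - ln u"
    using r0 E B u0 by (simp add: v_def ln_div ln_mult)
  have e2: "ln (u / r) = ln u - ln r" using r0 u0 by (simp add: ln_div)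
  have e3: "u * ln (v / u) = u * ln r + u * ln E - u * ln B - u * ln u" unfolding e1 by (simp add: algebra_simps)
  have e4: "u * ln (u / r) = u * ln u - u * ln r" unfolding e2 by (simp add: algebra_simps)
  have e5: "r * E / B = v" by (simp add: v_def)
  show ?thesis unfolding e4 e5 using * e3 by linarith
qed

definition gf :: "real \<Rightarrow> real^'d::finite \<Rightarrow> real" where
  "gf C z = max 0 (ln (1 / tnorm z) + C)"

lemma hf_gf: "hf \<kappa> C z = exp (\<kappa> * gf C z)"
  by (simp add: hf_def gf_def)

lemma gf_meas[measurable]: "gf C \<in> borel_measurable (borel :: (real^'d::finite) measure)"
  unfolding gf_def by measurable

definition GG :: "nat \<Rightarrow> real \<Rightarrow> (nat \<Rightarrow> real^'d::finite) \<Rightarrow> real" where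
  "GG N C X = (1 / (real N)^2) * (\<Sum>i<N. \<Sum>j\<in>{..<N}-{i}. gf C (X i - X j))"

lemma conv_bound:
  assumes N: "0 < N"
  shows "exp (\<kappa> * real N * GG N C X) \<le> (1 / real N) * (\<Sum>i<N. \<Prod>j\<in>{..<N}-{i}. hf \<kappa> C (X i - X j))"
proof -
  define y where "y i = \<kappa> * (\<Sum>j\<in>{..<N}-{i}. gf C (X i - X j))" for i
  have "\<kappa> * real N * GG N C X = (\<Sum>i<N. (1 / real N) *\<^sub>R y i)"
    using N by (simp add: GG_def y_def sum_distrib_left power2_eq_square field_simps)
  then have "exp (\<kappa> * real N * GG N C X) = exp (\<Sum>i<N. (1 / real N) *\<^sub>R y i)" by simp
  also have "\<dots> \<le> (\<Sum>i<N. (1 / real N) * exp (y i))"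
    using N by (intro convex_on_sum[OF _ _ exp_convex]) auto
  also have "\<dots> = (1 / real N) * (\<Sum>i<N. \<Prod>j\<in>{..<N}-{i}. hf \<kappa> C (X i - X j))"
    by (simp add: sum_distrib_left y_def exp_sum hf_gf)
  finally show ?thesis .
qed



lemma Ints_abs_less1: "n \<in> \<int> \<Longrightarrow> \<bar>n::real\<bar> < 1 \<Longrightarrow> n = 0"
proof -
  assume n: "n \<in> \<int>" and a: "\<bar>n\<bar> < 1"
  obtain m where m: "n = of_int m" using n Ints_cases by blast
  have "real_of_int \<bar>m\<bar> < 1" using a unfolding m by (simp only: of_int_abs)
  then have "\<bar>m\<bar> < 1" by simp
  then have "m = 0" by arith
  then show "n = 0" using m by simp
qed

lemma cell_diff_lattice:
  fixes x y :: "real^'d::finite"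
  assumes "x \<in> torus_cell" "y \<in> torus_cell" "x - y \<in> lattice"
  shows "x = y"
proof -
  have "x $ i = y $ i" for i
  proof -
    have "(x - y) $ i \<in> \<int>" using assms(3) by (simp add: lattice_def)
    moreover have "\<bar>(x - y) $ i\<bar> < 1"
    proof -
      have "0 \<le> x$i" "x$i < 1" "0 \<le> y$i" "y$i < 1" using assms(1,2) by (auto simp: torus_cell_def)
      then show ?thesis by (simp add: abs_less_iff)
    qed
    ultimately show ?thesis using Ints_abs_less1 by fastforce
  qed
  then show ?thesis by (simp add: vec_eq_iff)
qed

lemma space_config: "space (config N :: (nat \<Rightarrow> real^'d::finite) measure) = PiE {..<N} (\<lambda>_. torus_cell)"
  by (simp add: config_def space_PiM space_torus)

lemma inter_bound:
  fixes X :: "nat \<Rightarrow> real^'d::finite"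
  assumes X: "X \<in> space (config N)"
    and V: "\<forall>x. x \<notin> lattice \<longrightarrow> \<bar>V x\<bar> \<le> ln (1 / tnorm x) + C"
  shows "\<bar>interaction N V X\<bar> \<le> GG N C X"
proof -
  have Xc: "i < N \<Longrightarrow> X i \<in> torus_cell" for i using X by (auto simp: space_config)
  let ?t = "\<lambda>i j. if X i \<noteq> X j then V (X i - X j) else 0"
  have "\<bar>\<Sum>i<N. \<Sum>j<N. ?t i j\<bar> \<le> (\<Sum>i<N. \<bar>\<Sum>j<N. ?t i j\<bar>)" by (rule sum_abs)
  also have "\<dots> \<le> (\<Sum>i<N. \<Sum>j\<in>{..<N}-{i}. gf C (X i - X j))"
  proof (rule sum_mono)
    fix i assume i: "i \<in> {..<N}"
    have "\<bar>\<Sum>j<N. ?t i j\<bar> \<le> (\<Sum>j<N. \<bar>?t i j\<bar>)" by (rule sum_abs)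
    also have "\<dots> = \<bar>?t i i\<bar> + (\<Sum>j\<in>{..<N}-{i}. \<bar>?t i j\<bar>)"
      using i by (subst sum.remove[of _ i]) auto
    also have "\<dots> \<le> (\<Sum>j\<in>{..<N}-{i}. gf C (X i - X j))"
    proof -
      have hj: "\<bar>?t i j\<bar> \<le> gf C (X i - X j)" if j: "j \<in> {..<N}-{i}" for j
      proof (cases "X i = X j")
        case True then show ?thesis by (simp add: gf_def)
      next
        case False
        have "X i - X j \<notin> lattice"
          using cell_diff_lattice[OF Xc Xc] False i j by auto
        then show ?thesis using V False by (auto simp: gf_def)
      qed
      have "(\<Sum>j\<in>{..<N}-{i}. \<bar>?t i j\<bar>) \<le> (\<Sum>j\<in>{..<N}-{i}. gf C (X i - X j))"
        by (rule sum_mono) (rule hj)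
      then show ?thesis by simp
    qed
    finally show "\<bar>\<Sum>j<N. ?t i j\<bar> \<le> (\<Sum>j\<in>{..<N}-{i}. gf C (X i - X j))" .
  qed
  finally show ?thesis
    unfolding interaction_def GG_def by (simp add: abs_mult divide_right_mono)
qed

lemma V0_meas:
  fixes V :: "real^'d::finite \<Rightarrow> real"
  shows "V \<in> borel_measurable borel \<Longrightarrow> (\<lambda>z::real^'d::finite. if z \<noteq> 0 then V z else 0) \<in> borel_measurable borel"
proof -
  assume V: "V \<in> borel_measurable borel"
  have eq: "(\<lambda>z::real^'d. if z \<noteq> 0 then V z else 0) = (\<lambda>z. V z * indicator (-{0}) z)"
    by (auto simp: fun_eq_iff indicator_def)
  have "(-{0::real^'d}) \<in> sets borel" by (intro borel_open open_Compl closed_singleton)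
  then show ?thesis unfolding eq using V by (intro borel_measurable_times borel_measurable_indicator)
qed

lemma diff_meas:
  "i < N \<Longrightarrow> j < N \<Longrightarrow> (\<lambda>X. X i - X j) \<in> (config N :: (nat \<Rightarrow> real^'d::finite) measure) \<rightarrow>\<^sub>M borel"
  by (intro borel_measurable_diff config_comp_meas)

lemma interaction_meas:
  assumes "V \<in> borel_measurable borel"
  shows "interaction N V \<in> borel_measurable (config N :: (nat \<Rightarrow> real^'d::finite) measure)"
proof -
  have eq: "interaction N V = (\<lambda>X. (1 / (real N)^2) * (\<Sum>i<N. \<Sum>j<N. (\<lambda>z. if z \<noteq> 0 then V z else 0) (X i - X j)))"
    by (auto simp: interaction_def fun_eq_iff intro!: sum.cong)
  show ?thesis unfolding eq
    by (intro borel_measurable_times borel_measurable_const borel_measurable_sum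
              measurable_compose[OF diff_meas V0_meas[OF assms]]) auto
qed

lemma GG_meas:
  "GG N C \<in> borel_measurable (config N :: (nat \<Rightarrow> real^'d::finite) measure)"
  unfolding GG_def
  by (intro borel_measurable_times borel_measurable_const borel_measurable_sum
              measurable_compose[OF diff_meas gf_meas]) auto



lemma lnB_bound:
  fixes P :: real
  assumes "0 \<le> P" "0 < N"
  shows "ln (max 1 (P ^ (N - 1))) \<le> real N * P"
proof (cases "P ^ (N - 1) \<le> 1")
  case True then show ?thesis using assms by (simp add: max_def)
next
  case False
  then have P0: "0 < P" using assms(1)
    by (metis less_eq_real_def power_0_left power_0 zero_le_one)
  have "ln (max 1 (P ^ (N - 1))) = real (N - 1) * ln P" using False P0 by (simp add: max_def ln_realpow)
  also have "\<dots> \<le> real (N - 1) * P"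
    using ln_le_minus_one[OF P0] by (intro mult_left_mono) auto
  also have "\<dots> \<le> real N * P" using P0 by (intro mult_right_mono) auto
  finally show ?thesis .
qed

lemma GG_nonneg: "0 \<le> GG N C X"
  unfolding GG_def gf_def by (intro mult_nonneg_nonneg sum_nonneg) auto

lemma td_nonneg: "(\<And>x. 0 \<le> \<rho> x) \<Longrightarrow> 0 \<le> tensor_dens N \<rho> X"
  unfolding tensor_dens_def by (intro prod_nonneg) auto

lemma hf_pos: "0 < hf \<kappa> C z" by (simp add: hf_def)

theorem mainTheorem8:
  fixes C \<kappa> :: real
  assumes "0 < \<kappa>" and "\<kappa> < real CARD('d::finite)"
  shows "\<exists>Cd::real. \<forall>(V :: real ^ 'd \<Rightarrow> real) (\<rho>bar :: real ^ 'd \<Rightarrow> real)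
            (N :: nat) (\<rho>N :: (nat \<Rightarrow> real ^ 'd) \<Rightarrow> real).
     V \<in> borel_measurable borel \<and> periodic V \<and>
     (\<forall>x. x \<notin> lattice \<longrightarrow> \<bar>V x\<bar> \<le> ln (1 / tnorm x) + C) \<and>
     \<rho>bar \<in> borel_measurable torus \<and> (\<forall>x. 0 \<le> \<rho>bar x) \<and>
     integrable torus \<rho>bar \<and> (\<integral>x. \<rho>bar x \<partial>torus) = 1 \<and>
     esssup torus (\<lambda>x. ereal \<bar>\<rho>bar x\<bar>) < \<infinity> \<and>
     0 < N \<and>
     \<rho>N \<in> borel_measurable (config N) \<and> (\<forall>X. 0 \<le> \<rho>N X) \<and>
     integrable (config N) \<rho>N \<and> (\<integral>X. \<rho>N X \<partial>config N) = 1 \<and>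
     (AE X in config N. tensor_dens N \<rho>bar X = 0 \<longrightarrow> \<rho>N X = 0) \<and>
     integrable (config N) (\<lambda>X. \<rho>N X * ln (\<rho>N X / tensor_dens N \<rho>bar X))
     \<longrightarrow>
     integrable (config N) (\<lambda>X. \<rho>N X * interaction N V X) \<and>
     (\<integral>X. \<rho>N X * interaction N V X \<partial>config N)
        \<le> (1 / \<kappa>) * rel_entropy N \<rho>N \<rho>bar + Cd * Linf_norm \<rho>bar"
proof -
  note k0 = assms(1)
  define s where "s = \<kappa> / real CARD('d)"
  have cpos: "0 < real CARD('d)" by simp
  have s1: "s * real CARD('d) = \<kappa>" "0 \<le> s" "s < 1"
    using cpos k0 assms(2) by (auto simp: s_def field_simps)
  define A where "A = 1 + exp (\<kappa> * C) * (3 * Kb s) ^ CARD('d)"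
  have A1: "1 \<le> A" using s1 by (simp add: A_def Kb_def)
  have hA: "\<And>y. y \<in> torus_cell \<Longrightarrow> (\<integral>\<^sup>+x. ennreal (hf \<kappa> C (y - x)) \<partial>(torus :: (real^'d) measure)) \<le> ennreal A"
    unfolding A_def by (rule torus_hf_bound[OF k0 s1])
  show ?thesis
  proof (rule exI[of _ "A / \<kappa>"], intro allI impI)
    fix V :: "real ^ 'd \<Rightarrow> real" and \<rho>bar :: "real ^ 'd \<Rightarrow> real" and N :: nat
      and \<rho>N :: "(nat \<Rightarrow> real ^ 'd) \<Rightarrow> real"
    assume H: "V \<in> borel_measurable borel \<and> periodic V \<and>
     (\<forall>x. x \<notin> lattice \<longrightarrow> \<bar>V x\<bar> \<le> ln (1 / tnorm x) + C) \<and>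
     \<rho>bar \<in> borel_measurable torus \<and> (\<forall>x. 0 \<le> \<rho>bar x) \<and>
     integrable torus \<rho>bar \<and> (\<integral>x. \<rho>bar x \<partial>torus) = 1 \<and>
     esssup torus (\<lambda>x. ereal \<bar>\<rho>bar x\<bar>) < \<infinity> \<and>
     0 < N \<and>
     \<rho>N \<in> borel_measurable (config N) \<and> (\<forall>X. 0 \<le> \<rho>N X) \<and>
     integrable (config N) \<rho>N \<and> (\<integral>X. \<rho>N X \<partial>config N) = 1 \<and>
     (AE X in config N. tensor_dens N \<rho>bar X = 0 \<longrightarrow> \<rho>N X = 0) \<and>
     integrable (config N) (\<lambda>X. \<rho>N X * ln (\<rho>N X / tensor_dens N \<rho>bar X))"
    have Vm: "V \<in> borel_measurable borel" using H by blast
    have Vb: "\<forall>x. x \<notin> lattice \<longrightarrow> \<bar>V x\<bar> \<le> ln (1 / tnorm x) + C" using H by blast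
    have \<rho>m: "\<rho>bar \<in> borel_measurable torus" using H by blast
    have \<rho>0: "\<And>x. 0 \<le> \<rho>bar x" using H by blast
    have \<rho>int: "integrable torus \<rho>bar" using H by blast
    have \<rho>1': "(\<integral>x. \<rho>bar x \<partial>torus) = 1" using H by blast
    have ess: "esssup torus (\<lambda>x. ereal \<bar>\<rho>bar x\<bar>) < \<infinity>" using H by blast
    have N0: "0 < N" using H by blast
    have \<rho>Nm: "\<rho>N \<in> borel_measurable (config N)" using H by blast
    have \<rho>N0: "\<And>X. 0 \<le> \<rho>N X" using H by blast
    have \<rho>Nint: "integrable (config N) \<rho>N" using H by blast
    have \<rho>N1: "(\<integral>X. \<rho>N X \<partial>config N) = 1" using H by blast
    have AEz: "AE X in config N. tensor_dens N \<rho>bar X = 0 \<longrightarrow> \<rho>N X = 0" using H by blast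
    have Lint: "integrable (config N) (\<lambda>X. \<rho>N X * ln (\<rho>N X / tensor_dens N \<rho>bar X))" using H by blast

    define M where "M = Linf_norm \<rho>bar"
    have \<rho>M: "AE x in torus. \<rho>bar x \<le> M"
    proof -
      have "AE x in torus. ereal \<bar>\<rho>bar x\<bar> \<le> esssup torus (\<lambda>x. ereal \<bar>\<rho>bar x\<bar>)" by (rule esssup_AE)
      then show ?thesis
      proof eventually_elim
        case (elim x)
        let ?e = "esssup torus (\<lambda>x. ereal \<bar>\<rho>bar x\<bar>)"
        have "?e \<noteq> \<infinity>" using ess by auto
        moreover have "?e \<noteq> -\<infinity>" using elim by auto
        ultimately obtain r where r: "?e = ereal r" by (cases ?e) auto
        then show "\<rho>bar x \<le> M" using elim by (simp add: M_def Linf_norm_def)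
      qed
    qed
    have \<rho>1: "(\<integral>\<^sup>+x. ennreal (\<rho>bar x) \<partial>torus) = 1"
      using nn_integral_eq_integral[OF \<rho>int] \<rho>0 \<rho>1' by simp
    have M0: "0 \<le> M"
    proof (rule ccontr)
      assume nM: "\<not> 0 \<le> M"
      have "AE x in torus. ennreal (\<rho>bar x) = 0"
        using \<rho>M
      proof eventually_elim
        case (elim x)
        have False using elim nM \<rho>0[of x] by linarith
        then show ?case ..
      qed
      from nn_integral_cong_AE[OF this]
      have "(\<integral>\<^sup>+x. ennreal (\<rho>bar x) \<partial>torus) = 0" by simp
      then show False using \<rho>1 by simp
    qed
    have A0: "0 \<le> A" using A1 by simp

    define td where "td = tensor_dens N \<rho>bar"
    have td0: "\<And>X. 0 \<le> td X" unfolding td_def by (rule td_nonneg[OF \<rho>0])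
    have tdm: "td \<in> borel_measurable (config N)" unfolding td_def by (rule tensor_dens_meas[OF \<rho>m])
    define E where "E (X :: nat \<Rightarrow> real^'d) = exp (\<kappa> * real N * GG N C X)" for X
    have Em: "E \<in> borel_measurable (config N)" unfolding E_def using GG_meas by measurable
    have prodm: "(\<lambda>X. \<Prod>j\<in>{..<N}-{i}. hf \<kappa> C (X i - X j)) \<in> borel_measurable (config N)" if i: "i < N" for i
      using i by (intro borel_measurable_prod measurable_compose[OF diff_meas hf_meas]) auto
    have ZE: "(\<integral>\<^sup>+X. ennreal (td X * E X) \<partial>config N) \<le> ennreal ((M * A) ^ (N - 1))"
    proof -
      have "(\<integral>\<^sup>+X. ennreal (td X * E X) \<partial>config N) \<le>
         (\<integral>\<^sup>+X. (\<Sum>i<N. ennreal (1 / real N) * ennreal (td X * (\<Prod>j\<in>{..<N}-{i}. hf \<kappa> C (X i - X j)))) \<partial>config N)"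
      proof (rule nn_integral_mono)
        fix X
        have "td X * E X \<le> td X * ((1 / real N) * (\<Sum>i<N. \<Prod>j\<in>{..<N}-{i}. hf \<kappa> C (X i - X j)))"
          unfolding E_def using conv_bound[OF N0] td0 by (intro mult_left_mono) auto
        also have "\<dots> = (\<Sum>i<N. (1 / real N) * (td X * (\<Prod>j\<in>{..<N}-{i}. hf \<kappa> C (X i - X j))))"
          by (simp add: sum_distrib_left algebra_simps)
        finally have "ennreal (td X * E X) \<le> ennreal (\<Sum>i<N. (1 / real N) * (td X * (\<Prod>j\<in>{..<N}-{i}. hf \<kappa> C (X i - X j))))"
          by (rule ennreal_leI)
        also have "\<dots> = (\<Sum>i<N. ennreal (1 / real N) * ennreal (td X * (\<Prod>j\<in>{..<N}-{i}. hf \<kappa> C (X i - X j))))"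
        proof -
          have pn: "0 \<le> td X * (\<Prod>j\<in>{..<N}-{i}. hf \<kappa> C (X i - X j))" for i
            by (intro mult_nonneg_nonneg prod_nonneg td0 less_imp_le[OF hf_pos])
          have "ennreal (\<Sum>i<N. (1 / real N) * (td X * (\<Prod>j\<in>{..<N}-{i}. hf \<kappa> C (X i - X j))))
              = (\<Sum>i<N. ennreal ((1 / real N) * (td X * (\<Prod>j\<in>{..<N}-{i}. hf \<kappa> C (X i - X j)))))"
            by (rule sum_ennreal[symmetric]) (simp add: pn)
          also have "\<dots> = (\<Sum>i<N. ennreal (1 / real N) * ennreal (td X * (\<Prod>j\<in>{..<N}-{i}. hf \<kappa> C (X i - X j))))"
            by (intro sum.cong refl ennreal_mult) (simp_all add: pn)
          finally show ?thesis .
        qed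
        finally show "ennreal (td X * E X) \<le> (\<Sum>i<N. ennreal (1 / real N) * ennreal (td X * (\<Prod>j\<in>{..<N}-{i}. hf \<kappa> C (X i - X j))))" .
      qed
      also have "\<dots> = (\<Sum>i<N. ennreal (1 / real N) * (\<integral>\<^sup>+X. ennreal (td X * (\<Prod>j\<in>{..<N}-{i}. hf \<kappa> C (X i - X j))) \<partial>config N))"
        using tdm prodm by (subst nn_integral_sum) (auto intro!: sum.cong nn_integral_cmult)
      also have "\<dots> \<le> (\<Sum>i<N. ennreal (1 / real N) * ennreal ((M * A) ^ (N - 1)))"
      proof (rule sum_mono)
        fix i assume i: "i \<in> {..<N}"
        have "(\<integral>\<^sup>+X. ennreal (td X * (\<Prod>j\<in>{..<N}-{i}. hf \<kappa> C (X i - X j))) \<partial>config N) \<le> ennreal ((M * A) ^ (N - 1))"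
          unfolding td_def
          using star_bound[OF \<rho>m \<rho>0 hf_meas less_imp_le[OF hf_pos] \<rho>M \<rho>1 hA M0 A0, of i N] i by simp
        then show "ennreal (1 / real N) * (\<integral>\<^sup>+X. ennreal (td X * (\<Prod>j\<in>{..<N}-{i}. hf \<kappa> C (X i - X j))) \<partial>config N)
           \<le> ennreal (1 / real N) * ennreal ((M * A) ^ (N - 1))"
          by (rule mult_left_mono) simp
      qed
      also have "\<dots> = ennreal ((M * A) ^ (N - 1))"
        using N0 M0 A0 by (simp add: ennreal_mult[symmetric] ennreal_of_nat_eq_real_of_nat)
      finally show ?thesis .
    qed
    define B where "B = max 1 ((M * A) ^ (N - 1))"
    have B0: "0 < B" by (simp add: B_def)
    have ZB: "(\<integral>\<^sup>+X. ennreal (td X * E X) \<partial>config N) \<le> ennreal B"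
      using ZE by (rule order_trans) (simp add: B_def)
    have tdEm: "(\<lambda>X. td X * E X) \<in> borel_measurable (config N)" using tdm Em by measurable
    have tdE0: "\<And>X. 0 \<le> td X * E X" using td0 by (simp add: E_def)
    have int_tdE: "integrable (config N) (\<lambda>X. td X * E X)"
    proof (rule integrableI_bounded[OF tdEm])
      have "(\<integral>\<^sup>+X. ennreal (norm (td X * E X)) \<partial>config N) = (\<integral>\<^sup>+X. ennreal (td X * E X) \<partial>config N)"
        using tdE0 by (simp add: abs_of_nonneg)
      also have "\<dots> < \<infinity>" using ZB by (simp add: le_less_trans)
      finally show "(\<integral>\<^sup>+X. ennreal (norm (td X * E X)) \<partial>config N) < \<infinity>" .
    qed
    have int_tdE_le: "(\<integral>X. td X * E X \<partial>config N) \<le> B"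
    proof -
      have "ennreal (\<integral>X. td X * E X \<partial>config N) = (\<integral>\<^sup>+X. ennreal (td X * E X) \<partial>config N)"
        using nn_integral_eq_integral[OF int_tdE] tdE0 by simp
      then have "ennreal (\<integral>X. td X * E X \<partial>config N) \<le> ennreal B" using ZB by simp
      then show ?thesis using B0 by (subst (asm) ennreal_le_iff) auto
    qed

    define L where "L X = \<rho>N X * ln (\<rho>N X / td X)" for X
    have Lint': "integrable (config N) L" unfolding L_def[abs_def] td_def by (rule Lint)
    define R where "R X = L X + \<rho>N X * ln B - \<rho>N X + td X * E X / B" for X
    have Rint: "integrable (config N) R"
      unfolding R_def[abs_def] using Lint' \<rho>Nint int_tdE
      by (intro Bochner_Integration.integrable_add Bochner_Integration.integrable_diff
            integrable_mult_left integrable_divide) auto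
    have ptw: "AE X in config N. \<rho>N X * (\<kappa> * real N * GG N C X) \<le> R X"
      using AEz
    proof eventually_elim
      case (elim X)
      have "\<rho>N X * ln (E X) \<le> \<rho>N X * ln (\<rho>N X / td X) + \<rho>N X * ln B - \<rho>N X + td X * E X / B"
        by (rule dv_pt[OF \<rho>N0 td0 _ B0]) (use elim in \<open>auto simp: td_def E_def\<close>)
      then show ?case by (simp add: E_def R_def L_def)
    qed
    define lam where "lam = \<kappa> * real N"
    have lam0: "0 < lam" using k0 N0 by (simp add: lam_def)
    have Gm: "(\<lambda>X. \<rho>N X * GG N C X) \<in> borel_measurable (config N)"
      using \<rho>Nm GG_meas by measurable
    have Gint: "integrable (config N) (\<lambda>X. \<rho>N X * GG N C X)"
    proof (rule Bochner_Integration.integrable_bound[of _ "\<lambda>X. R X / lam"])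
      show "integrable (config N) (\<lambda>X. R X / lam)" using Rint by (rule integrable_divide)
      show "(\<lambda>X. \<rho>N X * GG N C X) \<in> borel_measurable (config N)" by (rule Gm)
      show "AE X in config N. norm (\<rho>N X * GG N C X) \<le> norm (R X / lam)"
        using ptw
      proof eventually_elim
        case (elim X)
        have nn: "0 \<le> \<rho>N X * GG N C X" using \<rho>N0 GG_nonneg by (rule mult_nonneg_nonneg)
        have "\<rho>N X * GG N C X \<le> R X / lam"
          using elim lam0 by (simp add: pos_le_divide_eq lam_def algebra_simps)
        moreover have "R X / lam \<le> \<bar>R X\<bar> / \<bar>lam\<bar>" using lam0 by (simp add: divide_right_mono)
        ultimately show ?case using nn by simp
      qed
    qed
    have Fm: "(\<lambda>X. \<rho>N X * interaction N V X) \<in> borel_measurable (config N)"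
      using \<rho>Nm interaction_meas[OF Vm] by measurable
    have FG: "\<And>X. X \<in> space (config N) \<Longrightarrow> \<bar>\<rho>N X * interaction N V X\<bar> \<le> \<rho>N X * GG N C X"
      using inter_bound[OF _ Vb] \<rho>N0 by (simp add: abs_mult mult_left_mono)
    have Fint: "integrable (config N) (\<lambda>X. \<rho>N X * interaction N V X)"
    proof (rule Bochner_Integration.integrable_bound[OF Gint Fm])
      show "AE X in config N. norm (\<rho>N X * interaction N V X) \<le> norm (\<rho>N X * GG N C X)"
      proof (intro AE_I2)
        fix X :: "nat \<Rightarrow> real^'d" assume X: "X \<in> space (config N)"
        have "\<bar>\<rho>N X * interaction N V X\<bar> \<le> \<rho>N X * GG N C X" by (rule FG[OF X])
        also have "\<dots> \<le> \<bar>\<rho>N X * GG N C X\<bar>" by simp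
        finally show "norm (\<rho>N X * interaction N V X) \<le> norm (\<rho>N X * GG N C X)" by simp
      qed
    qed
    have step1: "(\<integral>X. \<rho>N X * interaction N V X \<partial>config N) \<le> (\<integral>X. \<rho>N X * GG N C X \<partial>config N)"
      using Fint Gint by (rule integral_mono) (use FG in \<open>auto dest: abs_le_D1\<close>)
    have eqG: "(\<lambda>X. \<rho>N X * (\<kappa> * real N * GG N C X)) = (\<lambda>X. lam * (\<rho>N X * GG N C X))"
      by (simp add: fun_eq_iff lam_def)
    have "lam * (\<integral>X. \<rho>N X * GG N C X \<partial>config N) = (\<integral>X. \<rho>N X * (\<kappa> * real N * GG N C X) \<partial>config N)"
      unfolding eqG by (rule integral_mult_right_zero[symmetric])
    also have "\<dots> \<le> (\<integral>X. R X \<partial>config N)"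
    proof (rule integral_mono_AE[OF _ Rint ptw])
      show "integrable (config N) (\<lambda>X. \<rho>N X * (\<kappa> * real N * GG N C X))"
        unfolding eqG using Gint by (rule integrable_mult_right)
    qed
    also have "(\<integral>X. R X \<partial>config N) = (\<integral>X. L X \<partial>config N) + ln B - 1 + (\<integral>X. td X * E X \<partial>config N) / B"
      unfolding R_def using Lint' \<rho>Nint int_tdE \<rho>N1
      by (simp add: Bochner_Integration.integral_add Bochner_Integration.integral_diff
            integral_divide_zero integral_mult_right_zero integrable_mult_left integrable_divide
            Bochner_Integration.integrable_add Bochner_Integration.integrable_diff)
    also have "\<dots> \<le> (\<integral>X. L X \<partial>config N) + ln B"
      using int_tdE_le B0 by (simp add: divide_le_eq)
    finally have main: "lam * (\<integral>X. \<rho>N X * GG N C X \<partial>config N) \<le> (\<integral>X. L X \<partial>config N) + ln B" .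
    have lnB: "ln B \<le> real N * (M * A)"
      unfolding B_def using M0 A0 N0 by (intro lnB_bound) auto
    have rel: "rel_entropy N \<rho>N \<rho>bar = (1 / real N) * (\<integral>X. L X \<partial>config N)"
      by (simp add: rel_entropy_def L_def td_def)
    have "(\<integral>X. \<rho>N X * GG N C X \<partial>config N) \<le> ((\<integral>X. L X \<partial>config N) + real N * (M * A)) / lam"
      using main lnB lam0 by (simp add: pos_le_divide_eq mult.commute)
    also have "\<dots> = (1 / \<kappa>) * rel_entropy N \<rho>N \<rho>bar + A / \<kappa> * Linf_norm \<rho>bar"
      unfolding rel M_def[symmetric] lam_def using k0 N0 by (simp add: field_simps)
    finally show "integrable (config N) (\<lambda>X. \<rho>N X * interaction N V X) \<and>
     (\<integral>X. \<rho>N X * interaction N V X \<partial>config N)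
        \<le> (1 / \<kappa>) * rel_entropy N \<rho>N \<rho>bar + A / \<kappa> * Linf_norm \<rho>bar"
      using Fint step1 by simp
  qed
qed


end
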